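(* Consider the following single-link transmission system. Time is slotted, $t=0,1,2,\dots$. A fixed amount $\delta>0$ of mutual information is called a data unit. A sequence of packets $f=0,1,2,\dots$ is transmitted one at a time; packet $f$ has length $L[f]$, a positive integer number of data units, with $\{L[f]\}$ i.i.d. taking values in a finite set $\mathcal{L}$, and $L_{\max}=\max_{L\in\mathcal{L}}L$. The channel gain $\alpha(t)>0$ is i.i.d. over slots taking values in a finite set $\mathcal{A}=\{\alpha_1,\dots,\alpha_{|\mathcal{A}|}\}$ with probabilities $\phi(\alpha_i)$. In each slot the source picks a power spectral density $P(t)\in\mathcal{P}=\{P_1,\dots,P_{|\mathcal{P}|}\}$ with $0<P_1<P_2<\cdots<P_{|\mathcal{P}|}$, before observing $\alpha(t)$; the receiver then accumulates $K(\alpha(t),P(t))$ data units, where $K:\mathcal{A}\times\mathcal{P}\to\{1,2,3,\dots\}$ is nondecreasing in each argument, and $K_{\min}=\min_{\alpha\in\mathcal{A}}K(\alpha,P_1)$. Frame $f$ starts at slot $t_f$ (with $t_0=0$) and ends at the first slot $t_{f+1}-1$ such that $\sum_{t=t_f}^{t_{f+1}-1}K(\alpha(t),P(t))\ge L[f]$; $T[f]=t_{f+1}-t_f$. Let $\beta>0$ with $P_1<\beta$, and let $V>0$. The proposed algorithm maintains $Q[0]=0$, $Q[f+1]=\max\{Q[f]+\sum_{t=t_f}^{t_{f+1}-1}(P(t)-\beta),0\}$, and defines $R_f(P)=V+Q[f](P-\beta)$ for $P\in\mathcal{P}$. At the start of frame $f$, having observed $Q[f]$ and $L[f]$, it chooses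 power allocations over the frame so as to minimize $\mathbb{E}\big[\sum_{t=t_f}^{t_{f+1}-1}R_f(P(t))\,\big|\,Q[f],L[f]\big]$ subject to $\sum_{t=t_f}^{t_{f+1}-1}K(\alpha(t),P(t))\ge L[f]$; in particular, whenever $R_f(P_j)<0$ for some $P_j\in\mathcal{P}$, it uses $P(t)=P_1$ in every slot of frame $f$ (and otherwise uses a dynamic-programming solution of the minimization). Then for all $f\in\{1,2,3,\dots\}$, \[Q[f]\le \max\left\{\frac{V}{\beta-P_1}+\left\lceil\frac{L_{\max}}{K_{\min}}\right\rceil\,(P_{|\mathcal{P}|}-\beta),\;0\right\}.\]
   Context: $\lceil x\rceil$ is the smallest integer greater than or equal to $x$. The source observes $L[f]$ at the start of frame $f$, does not observe $\alpha(t)$ before choosing $P(t)$, knows the distribution $\phi$, and learns $\alpha(t)$ (hence the delivered mutual information) by feedback at the end of slot $t$. The source cannot start a new packet before the previous one is decoded. *)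

theory Defs
  imports Complex_Main
begin

text \<open>Sample-path model of the single-link system.\<close>

fun frame_start :: "(real \<Rightarrow> real \<Rightarrow> nat) \<Rightarrow> (nat \<Rightarrow> real) \<Rightarrow> (nat \<Rightarrow> real)
    \<Rightarrow> (nat \<Rightarrow> nat) \<Rightarrow> nat \<Rightarrow> nat" where
  "frame_start K alpha Pw Lp 0 = 0"
| "frame_start K alpha Pw Lp (Suc f) =
     (LEAST t. frame_start K alpha Pw Lp f < t \<and>
        real (Lp f) \<le> (\<Sum>s\<in>{frame_start K alpha Pw Lp f..<t}. real (K (alpha s) (Pw s))))"

fun Qv :: "(real \<Rightarrow> real \<Rightarrow> nat) \<Rightarrow> (nat \<Rightarrow> real) \<Rightarrow> (nat \<Rightarrow> real)
    \<Rightarrow> (nat \<Rightarrow> nat) \<Rightarrow> real \<Rightarrow> nat \<Rightarrow> real" where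
  "Qv K alpha Pw Lp \<beta> 0 = 0"
| "Qv K alpha Pw Lp \<beta> (Suc f) =
     max (Qv K alpha Pw Lp \<beta> f +
          (\<Sum>t\<in>{frame_start K alpha Pw Lp f..<frame_start K alpha Pw Lp (Suc f)}. Pw t - \<beta>)) 0"

text \<open>Finite-horizon dynamic programme for one frame with per-slot cost \<open>R\<close>:
 \<open>Jn \<dots> n r\<close> is the minimal expected cost to deliver \<open>r\<close> remaining data units
 (horizon bound \<open>n\<close>; since \<open>K \<ge> 1\<close>, \<open>n = r\<close> gives the exact optimum).\<close>
fun Jn :: "(real \<Rightarrow> real) \<Rightarrow> real set \<Rightarrow> real set \<Rightarrow> (real \<Rightarrow> real)
    \<Rightarrow> (real \<Rightarrow> real \<Rightarrow> nat) \<Rightarrow> nat \<Rightarrow> nat \<Rightarrow> real" where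
  "Jn R Ps As \<phi> K 0 r = 0"
| "Jn R Ps As \<phi> K (Suc n) r =
     (if r = 0 then 0
      else Min ((\<lambda>P. R P + (\<Sum>a\<in>As. \<phi> a * Jn R Ps As \<phi> K n (r - K a P))) ` Ps))"

definition frame_value :: "(real \<Rightarrow> real) \<Rightarrow> real set \<Rightarrow> real set \<Rightarrow> (real \<Rightarrow> real)
    \<Rightarrow> (real \<Rightarrow> real \<Rightarrow> nat) \<Rightarrow> nat \<Rightarrow> real" where
  "frame_value R Ps As \<phi> K r = Jn R Ps As \<phi> K r r"

definition dp_cost :: "(real \<Rightarrow> real) \<Rightarrow> real set \<Rightarrow> real set \<Rightarrow> (real \<Rightarrow> real)
    \<Rightarrow> (real \<Rightarrow> real \<Rightarrow> nat) \<Rightarrow> nat \<Rightarrow> real \<Rightarrow> real" where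
  "dp_cost R Ps As \<phi> K r P =
     R P + (\<Sum>a\<in>As. \<phi> a * frame_value R Ps As \<phi> K (r - K a P))"

end

theory Submission
  imports Defs
begin

theorem mainTheorem2:
  fixes As :: "real set" and \<phi> :: "real \<Rightarrow> real"
    and Ps :: "real set" and Ls :: "nat set"
    and K :: "real \<Rightarrow> real \<Rightarrow> nat"
    and alpha :: "nat \<Rightarrow> real" and Lp :: "nat \<Rightarrow> nat" and Pw :: "nat \<Rightarrow> real"
    and \<beta> V :: real
  assumes As_fin: "finite As" and As_ne: "As \<noteq> {}" and As_pos: "\<forall>a\<in>As. a > 0"
    and \<phi>_pos: "\<forall>a\<in>As. \<phi> a > 0" and \<phi>_sum: "(\<Sum>a\<in>As. \<phi> a) = 1"
    and Ps_fin: "finite Ps" and Ps_ne: "Ps \<noteq> {}" and Ps_pos: "\<forall>P\<in>Ps. P > 0"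
    and Ls_fin: "finite Ls" and Ls_ne: "Ls \<noteq> {}" and Ls_pos: "\<forall>l\<in>Ls. l > 0"
    and K_pos: "\<forall>a\<in>As. \<forall>P\<in>Ps. K a P \<ge> 1"
    and K_mono_a: "\<forall>a\<in>As. \<forall>a'\<in>As. \<forall>P\<in>Ps. a \<le> a' \<longrightarrow> K a P \<le> K a' P"
    and K_mono_P: "\<forall>a\<in>As. \<forall>P\<in>Ps. \<forall>P'\<in>Ps. P \<le> P' \<longrightarrow> K a P \<le> K a P'"
    and alpha_in: "\<forall>t. alpha t \<in> As"
    and Lp_in: "\<forall>f. Lp f \<in> Ls"
    and Pw_in: "\<forall>t. Pw t \<in> Ps"
    and \<beta>_gt: "Min Ps < \<beta>" and V_pos: "V > 0"
    and algorithm: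
      "\<forall>f. \<forall>t\<in>{frame_start K alpha Pw Lp f..<frame_start K alpha Pw Lp (Suc f)}.
         (let R = (\<lambda>P. V + Qv K alpha Pw Lp \<beta> f * (P - \<beta>));
              r = Lp f - (\<Sum>s\<in>{frame_start K alpha Pw Lp f..<t}. K (alpha s) (Pw s))
          in if (\<exists>P\<in>Ps. R P < 0) then Pw t = Min Ps
             else (\<forall>P\<in>Ps. dp_cost R Ps As \<phi> K r (Pw t) \<le> dp_cost R Ps As \<phi> K r P))"
  shows "\<forall>f\<ge>1. Qv K alpha Pw Lp \<beta> f \<le>
           max (V / (\<beta> - Min Ps)
                + of_int \<lceil>real (Max Ls) / real (Min ((\<lambda>a. K a (Min Ps)) ` As))\<rceil>
                  * (Max Ps - \<beta>)) 0"
proof -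
  define st where "st = frame_start K alpha Pw Lp"
  define Q where "Q = Qv K alpha Pw Lp \<beta>"
  define P1 where "P1 = Min Ps"
  define Pm where "Pm = Max Ps"
  define Km where "Km = Min ((\<lambda>a. K a (Min Ps)) ` As)"
  define Cr where "Cr = \<lceil>real (Max Ls) / real Km\<rceil>"
  define C where "C = nat Cr"
  define B where "B = max (V / (\<beta> - P1) + of_int Cr * (Pm - \<beta>)) 0"
  have P1in: "P1 \<in> Ps" using Ps_fin Ps_ne P1_def by simp
  have Pm_ge: "\<forall>P\<in>Ps. P \<le> Pm" using Ps_fin Pm_def by simp
  have P1_le: "\<forall>P\<in>Ps. P1 \<le> P" using Ps_fin P1_def by simp
  have Km_in: "Km \<in> (\<lambda>a. K a (Min Ps)) ` As" unfolding Km_def using As_fin As_ne by (intro Min_in) auto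
  have Km_pos: "Km \<ge> 1" using Km_in K_pos P1in P1_def by auto
  have Km_le: "\<forall>a\<in>As. Km \<le> K a P1" unfolding Km_def P1_def using As_fin by simp
  have Kslot: "\<forall>t. Km \<le> K (alpha t) (Pw t)"
  proof
    fix t
    have "Km \<le> K (alpha t) P1" using Km_le alpha_in by auto
    also have "\<dots> \<le> K (alpha t) (Pw t)" using K_mono_P alpha_in Pw_in P1in P1_le by auto
    finally show "Km \<le> K (alpha t) (Pw t)" .
  qed
  have MLs: "\<forall>f. Lp f \<le> Max Ls" using Ls_fin Lp_in by simp
  have Cr_ge: "real (Max Ls) \<le> of_int Cr * real Km"
  proof -
    have "real (Max Ls) / real Km \<le> of_int Cr" unfolding Cr_def by simp
    thus ?thesis using Km_pos by (simp add: divide_le_eq)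
  qed
  have Cr_nn: "Cr \<ge> 0" unfolding Cr_def using Km_pos by (simp add: less_le_trans[of "-1" 0])
  have Creal: "real C = of_int Cr" unfolding C_def using Cr_nn by simp
  have frame: "st f < st (Suc f) \<and> st (Suc f) \<le> st f + C" for f
  proof -
    let ?P = "\<lambda>t. st f < t \<and> real (Lp f) \<le> (\<Sum>s\<in>{st f..<t}. real (K (alpha s) (Pw s)))"
    have sS: "st (Suc f) = (LEAST t. ?P t)" unfolding st_def by simp
    have Lpos: "Lp f > 0" using Ls_pos Lp_in by auto
    have "real (Lp f) \<le> real (Max Ls)" using MLs by simp
    also have "\<dots> \<le> real C * real Km" using Cr_ge Creal by simp
    also have "\<dots> = (\<Sum>s\<in>{st f..<st f + C}. real Km)" by simp
    also have "\<dots> \<le> (\<Sum>s\<in>{st f..<st f + C}. real (K (alpha s) (Pw s)))"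
      by (intro sum_mono) (use Kslot in auto)
    finally have h: "real (Lp f) \<le> (\<Sum>s\<in>{st f..<st f + C}. real (K (alpha s) (Pw s)))" .
    have "C > 0"
    proof (rule ccontr)
      assume "\<not> C > 0" then have "C = 0" by simp
      with h Lpos show False by simp
    qed
    hence PC: "?P (st f + C)" using h by simp
    have "st (Suc f) \<le> st f + C" unfolding sS by (rule Least_le[where P="?P", OF PC])
    moreover have "?P (st (Suc f))" unfolding sS by (rule LeastI[where P="?P", OF PC])
    ultimately show ?thesis by simp
  qed
  have Qnn: "Q f \<ge> 0" for f by (cases f) (simp_all add: Q_def)
  have main: "Q f \<le> B" for f
  proof (induction f)
    case 0 show ?case by (simp add: Q_def B_def)
  next
    case (Suc f)
    have QS: "Q (Suc f) = max (Q f + (\<Sum>t\<in>{st f..<st (Suc f)}. Pw t - \<beta>)) 0"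
      by (simp add: Q_def st_def)
    have alg: "\<forall>t\<in>{st f..<st (Suc f)}. (\<exists>P\<in>Ps. V + Q f * (P - \<beta>) < 0) \<longrightarrow> Pw t = P1"
    proof (intro ballI impI)
      fix t assume t: "t \<in> {st f..<st (Suc f)}" and ex: "\<exists>P\<in>Ps. V + Q f * (P - \<beta>) < 0"
      note A = algorithm[rule_format, OF t[unfolded st_def]]
      from ex have ex': "\<exists>P\<in>Ps. V + Qv K alpha Pw Lp \<beta> f * (P - \<beta>) < 0" by (simp only: Q_def)
      from A show "Pw t = P1" unfolding Let_def P1_def by (simp only: ex' if_True)
    qed
    show ?case
    proof (cases "\<exists>P\<in>Ps. V + Q f * (P - \<beta>) < 0")
      case True
      then have "\<forall>t\<in>{st f..<st (Suc f)}. Pw t = P1" using alg by auto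
      then have "(\<Sum>t\<in>{st f..<st (Suc f)}. Pw t - \<beta>) \<le> 0"
        using \<beta>_gt P1_def by (intro sum_nonpos) auto
      then have "Q (Suc f) \<le> max (Q f) 0" unfolding QS by simp
      then show ?thesis using Suc.IH Qnn[of f] B_def by simp
    next
      case False
      then have "V + Q f * (P1 - \<beta>) \<ge> 0" using P1in by auto
      then have QV: "Q f \<le> V / (\<beta> - P1)" using \<beta>_gt P1_def
        by (simp add: le_divide_eq algebra_simps)
      have Tle: "st (Suc f) - st f \<le> C" and Tpos: "st f < st (Suc f)" using frame[of f] by auto
      have sum_le: "(\<Sum>t\<in>{st f..<st (Suc f)}. Pw t - \<beta>) \<le> real (st (Suc f) - st f) * (Pm - \<beta>)"
      proof -
        have "(\<Sum>t\<in>{st f..<st (Suc f)}. Pw t - \<beta>) \<le> (\<Sum>t\<in>{st f..<st (Suc f)}. Pm - \<beta>)"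
          by (intro sum_mono) (use Pm_ge Pw_in in auto)
        thus ?thesis by simp
      qed
      show ?thesis
      proof (cases "Pm \<le> \<beta>")
        case True
        have "real (st (Suc f) - st f) * (Pm - \<beta>) \<le> 0"
          using True by (simp add: mult_nonneg_nonpos)
        with sum_le have "Q (Suc f) \<le> max (Q f) 0" unfolding QS by simp
        then show ?thesis using Suc.IH Qnn[of f] B_def by simp
      next
        case False
        have "real (st (Suc f) - st f) * (Pm - \<beta>) \<le> real C * (Pm - \<beta>)"
          using False Tle by (intro mult_right_mono) auto
        with sum_le QV have "Q f + (\<Sum>t\<in>{st f..<st (Suc f)}. Pw t - \<beta>) \<le> V / (\<beta> - P1) + of_int Cr * (Pm - \<beta>)"
          by (simp only: Creal[symmetric])
        then show ?thesis unfolding QS B_def by (simp add: max_def)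
      qed
    qed
  qed
  show ?thesis using main unfolding Q_def B_def Cr_def Km_def P1_def Pm_def by blast
qed

end
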